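(* Let $X$ be a compact $\ell_1$-convex subset of $\mathbb{R}^m$, $Y$ a compact $\ell_1$-convex subset of $\mathbb{R}^n$, and $0\le k\le m+n$. Then $X\times Y\subseteq\mathbb{R}^{m+n}$ satisfies \[ V_k(X\times Y)=\sum_{i+j=k}V_i(X)V_j(Y), \] where $0\le i\le m$ and $0\le j\le n$ in the summation.
   Context: A subset $Z\subseteq\mathbb{R}^N$ is $\ell_1$-convex if for all $z,z'\in Z$, with $D=\sum_i|z_i-z'_i|$, there is $\gamma\colon[0,D]\to Z$ with $\gamma(0)=z,\gamma(D)=z'$ and $\sum_i|\gamma_i(t)-\gamma_i(t')|=|t-t'|$ for all $t,t'$; products of $\ell_1$-convex sets are $\ell_1$-convex. For a compact $\ell_1$-convex $Z\subseteq\mathbb{R}^N$, $V_i(Z)=\sum_{P\in G_{N,i}}\mathrm{Vol}_i(\pi_PZ)$, where $G_{N,i}$ is the set of $i$-dimensional coordinate subspaces of $\mathbb{R}^N$ (spanned by $i$ standard basis vectors), $\pi_P$ is orthogonal projection, and $\mathrm{Vol}_i$ is Lebesgue measure on $P$. *)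

theory Defs
  imports "HOL-Analysis.Analysis"
begin

text \<open>Points of R^N are represented as extensional functions in PiE {..<N} (%_. UNIV)
  (coordinates 0..N-1; value undefined elsewhere).\<close>

definition euclid :: "nat \<Rightarrow> (nat \<Rightarrow> real) set" where
  "euclid N = PiE {..<N} (\<lambda>_. UNIV)"

definition l1dist :: "nat \<Rightarrow> (nat \<Rightarrow> real) \<Rightarrow> (nat \<Rightarrow> real) \<Rightarrow> real" where
  "l1dist N z z' = (\<Sum>i<N. \<bar>z i - z' i\<bar>)"

definition l1_convex :: "nat \<Rightarrow> (nat \<Rightarrow> real) set \<Rightarrow> bool" where
  "l1_convex N Z \<longleftrightarrow> (\<forall>z\<in>Z. \<forall>z'\<in>Z.
     (\<exists>\<gamma> :: real \<Rightarrow> (nat \<Rightarrow> real).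
        \<gamma> 0 = z \<and> \<gamma> (l1dist N z z') = z' \<and>
        (\<forall>t\<in>{0..l1dist N z z'}. \<gamma> t \<in> Z) \<and>
        (\<forall>t\<in>{0..l1dist N z z'}. \<forall>t'\<in>{0..l1dist N z z'}.
            l1dist N (\<gamma> t) (\<gamma> t') = \<bar>t - t'\<bar>)))"

definition coord_subspaces :: "nat \<Rightarrow> nat \<Rightarrow> nat set set" where
  "coord_subspaces N i = {S. S \<subseteq> {..<N} \<and> card S = i}"

definition proj_vol :: "nat set \<Rightarrow> (nat \<Rightarrow> real) set \<Rightarrow> real" where
  "proj_vol S Z = measure (PiM S (\<lambda>_. lborel)) ((\<lambda>z. restrict z S) ` Z)"

definition intrinsic_vol :: "nat \<Rightarrow> nat \<Rightarrow> (nat \<Rightarrow> real) set \<Rightarrow> real" where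
  "intrinsic_vol N i Z = (\<Sum>S\<in>coord_subspaces N i. proj_vol S Z)"

definition prod_set :: "nat \<Rightarrow> nat \<Rightarrow> (nat \<Rightarrow> real) set \<Rightarrow> (nat \<Rightarrow> real) set \<Rightarrow> (nat \<Rightarrow> real) set" where
  "prod_set m n X Y = {(\<lambda>i. if i < m then x i else if i < m + n then y (i - m) else undefined)
                        | x y. x \<in> X \<and> y \<in> Y}"

end

theory Submission
  imports Defs
begin

lemma compact_in_PiM:
  fixes K :: "(nat \<Rightarrow> real) set"
  assumes "compact K" "K \<subseteq> PiE S (\<lambda>_. UNIV)"
  shows "K \<in> sets (PiM S (\<lambda>_. lborel))"
proof -
  have "K \<in> sets (borel :: (nat \<Rightarrow> real) measure)"
    using assms(1) by (simp add: borel_closed compact_imp_closed)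
  hence K: "K \<in> sets (PiM UNIV (\<lambda>_::nat. borel :: real measure))"
    using sets_PiM_equal_borel by blast
  have meas: "(\<lambda>\<omega> i. (\<lambda>\<omega>. \<omega> i) \<omega>) \<in> measurable (PiM S (\<lambda>_. lborel)) (PiM UNIV (\<lambda>_::nat. borel :: real measure))"
  proof (rule measurable_PiM_single')
    fix i :: nat
    show "(\<lambda>\<omega>. \<omega> i) \<in> measurable (PiM S (\<lambda>_. lborel :: real measure)) (borel :: real measure)"
    proof (cases "i \<in> S")
      case True
      then show ?thesis
        using measurable_component_singleton[of i S "\<lambda>_. lborel"]
        by (simp cong: measurable_cong_sets)
    next
      case False
      have "(\<lambda>\<omega>. \<omega> i) \<in> measurable (PiM S (\<lambda>_. lborel)) (borel :: real measure) \<longleftrightarrow>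
            (\<lambda>\<omega>. undefined :: real) \<in> measurable (PiM S (\<lambda>_. lborel :: real measure)) borel"
        by (rule measurable_cong[where f="\<lambda>\<omega>. \<omega> i" and g="\<lambda>\<omega>. undefined"]) (use False in \<open>auto simp: space_PiM PiE_def extensional_def\<close>)
      then show ?thesis by simp
    qed
  qed auto
  have "(\<lambda>\<omega> i. (\<lambda>\<omega>. \<omega> i) \<omega>) -` K \<inter> space (PiM S (\<lambda>_. lborel)) \<in> sets (PiM S (\<lambda>_. lborel))"
    using measurable_sets[OF meas K] .
  moreover have "(\<lambda>\<omega> i. (\<lambda>\<omega>. \<omega> i) \<omega>) -` K \<inter> space (PiM S (\<lambda>_. lborel)) = K"
    using assms(2) by (auto simp: space_PiM)
  ultimately show ?thesis by simp
qed

lemma PiM_lborel_reindex: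
  fixes f :: "'i \<Rightarrow> 'j"
  assumes "finite I" "inj_on f I"
  shows "distr (PiM (f`I) (\<lambda>_. lborel)) (PiM I (\<lambda>_. lborel)) (\<lambda>\<omega>. \<lambda>i\<in>I. \<omega> (f i)) = PiM I (\<lambda>_. lborel)"
proof -
  interpret product_sigma_finite "\<lambda>_::'i. lborel" by standard
  interpret J: product_sigma_finite "\<lambda>_::'j. lborel" by standard
  interpret J: finite_product_sigma_finite "\<lambda>_::'j. lborel" "f`I" by standard (use assms in auto)
  have meas: "(\<lambda>\<omega>. \<lambda>i\<in>I. \<omega> (f i)) \<in> measurable (PiM (f`I) (\<lambda>_. lborel)) (PiM I (\<lambda>_. lborel))"
    by (rule measurable_restrict) (auto intro!: measurable_component_singleton)
  show ?thesis
  proof (rule PiM_eqI)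
    fix A assume A: "\<And>i. i \<in> I \<Longrightarrow> A i \<in> sets lborel"
    have pre: "(\<lambda>\<omega>. \<lambda>i\<in>I. \<omega> (f i)) -` PiE I A \<inter> space (PiM (f`I) (\<lambda>_. lborel))
        = PiE (f`I) (\<lambda>j. A (the_inv_into I f j))"
      using assms by (auto simp: space_PiM PiE_iff the_inv_into_f_f extensional_def)
    have "emeasure (distr (PiM (f`I) (\<lambda>_. lborel)) (PiM I (\<lambda>_. lborel)) (\<lambda>\<omega>. \<lambda>i\<in>I. \<omega> (f i))) (PiE I A)
        = emeasure (PiM (f`I) (\<lambda>_. lborel)) (PiE (f`I) (\<lambda>j. A (the_inv_into I f j)))"
      using A by (subst emeasure_distr[OF meas]) (auto simp: pre intro!: sets_PiM_I_finite assms)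
    also have "\<dots> = (\<Prod>j\<in>f`I. emeasure lborel (A (the_inv_into I f j)))"
      using A assms by (intro J.measure_times) (auto simp: the_inv_into_f_f)
    also have "\<dots> = (\<Prod>i\<in>I. emeasure lborel (A i))"
      using assms by (subst prod.reindex) (auto simp: the_inv_into_f_f)
    finally show "emeasure (distr (PiM (f`I) (\<lambda>_. lborel)) (PiM I (\<lambda>_. lborel)) (\<lambda>\<omega>. \<lambda>i\<in>I. \<omega> (f i))) (PiE I A)
        = (\<Prod>i\<in>I. emeasure lborel (A i))" .
  qed (use assms in auto)
qed

definition comb :: "nat \<Rightarrow> nat \<Rightarrow> (nat \<Rightarrow> real) \<Rightarrow> (nat \<Rightarrow> real) \<Rightarrow> nat \<Rightarrow> real" where
  "comb m n x y = (\<lambda>i. if i < m then x i else if i < m + n then y (i - m) else undefined)"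

lemma prod_set_eq: "prod_set m n X Y = (\<lambda>p. comb m n (fst p) (snd p)) ` (X \<times> Y)"
proof (intro set_eqI iffI)
  fix z assume "z \<in> prod_set m n X Y"
  then obtain x y where "x \<in> X" "y \<in> Y" "z = comb m n x y" unfolding prod_set_def comb_def by blast
  then show "z \<in> (\<lambda>p. comb m n (fst p) (snd p)) ` (X \<times> Y)" by (auto intro!: image_eqI[where x="(x,y)"])
next
  fix z assume "z \<in> (\<lambda>p. comb m n (fst p) (snd p)) ` (X \<times> Y)"
  then show "z \<in> prod_set m n X Y" unfolding prod_set_def comb_def apply (auto cong: if_cong) by blast
qed

lemma cont_restrict: "continuous_on UNIV (\<lambda>z::nat \<Rightarrow> real. restrict z S)"
proof (rule continuous_on_coordinatewise_then_product)
  fix i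
  show "continuous_on UNIV (\<lambda>z::nat \<Rightarrow> real. restrict z S i)"
    by (cases "i \<in> S") (simp_all add: continuous_on_const)
qed

lemma compact_prod_set:
  assumes "compact X" "compact Y"
  shows "compact (prod_set m n X Y)"
  unfolding prod_set_eq
proof (rule compact_continuous_image)
  show "compact (X \<times> Y)" using assms by (rule compact_Times)
  show "continuous_on (X \<times> Y) (\<lambda>p. comb m n (fst p) (snd p))"
  proof (rule continuous_on_coordinatewise_then_product)
    fix i
    have f: "continuous_on (X \<times> Y) (\<lambda>p::(nat\<Rightarrow>real)\<times>(nat\<Rightarrow>real). fst p j)" for j
      by (rule continuous_on_product_then_coordinatewise) (intro continuous_intros)
    have s: "continuous_on (X \<times> Y) (\<lambda>p::(nat\<Rightarrow>real)\<times>(nat\<Rightarrow>real). snd p j)" for j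
      by (rule continuous_on_product_then_coordinatewise) (intro continuous_intros)
    show "continuous_on (X \<times> Y) (\<lambda>p. comb m n (fst p) (snd p) i)"
      unfolding comb_def using f s by (cases "i < m"; cases "i < m + n") (simp_all add: continuous_on_const)
  qed
qed

lemma compact_restrict_image:
  assumes "compact K" shows "compact ((\<lambda>z::nat\<Rightarrow>real. restrict z S) ` K)"
  using compact_continuous_image[OF continuous_on_subset[OF cont_restrict] assms] by auto

lemma restrict_image_sub: "(\<lambda>z. restrict z S) ` K \<subseteq> PiE S (\<lambda>_. UNIV)"
  by auto

lemma proj_prod:
  assumes X: "compact X" and Y: "compact Y" and S1: "S1 \<subseteq> {..<m}" and S2: "S2 \<subseteq> {..<n}"
  shows "proj_vol (S1 \<union> (\<lambda>j. j + m) ` S2) (prod_set m n X Y) = proj_vol S1 X * proj_vol S2 Y"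
proof -
  interpret product_sigma_finite "\<lambda>_::nat. lborel :: real measure" by standard
  define T where "T = (\<lambda>j. j + m) ` S2"
  have fS1: "finite S1" using S1 finite_subset by blast
  have fS2: "finite S2" using S2 finite_subset by blast
  have fT: "finite T" using fS2 by (simp add: T_def)
  have disj: "S1 \<inter> T = {}" using S1 by (auto simp: T_def)
  let ?P1 = "PiM S1 (\<lambda>_. lborel :: real measure)"
  let ?P2 = "PiM T (\<lambda>_. lborel :: real measure)"
  let ?P = "PiM (S1 \<union> T) (\<lambda>_. lborel :: real measure)"
  let ?Q = "PiM S2 (\<lambda>_. lborel :: real measure)"
  define E where "E = (\<lambda>z. restrict z (S1 \<union> T)) ` prod_set m n X Y"
  define A where "A = (\<lambda>z. restrict z S1) ` X"
  define B where "B = (\<lambda>z. restrict z S2) ` Y"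
  define B' where "B' = (\<lambda>\<omega>. \<lambda>j\<in>S2. \<omega> (j + m)) -` B \<inter> space ?P2"
  have E: "E \<in> sets ?P"
    unfolding E_def by (intro compact_in_PiM compact_restrict_image compact_prod_set X Y restrict_image_sub)
  have A: "A \<in> sets ?P1"
    unfolding A_def by (intro compact_in_PiM compact_restrict_image X restrict_image_sub)
  have B: "B \<in> sets ?Q"
    unfolding B_def by (intro compact_in_PiM compact_restrict_image Y restrict_image_sub)
  have mapm: "(\<lambda>\<omega>. \<lambda>j\<in>S2. \<omega> (j + m)) \<in> measurable ?P2 ?Q"
    unfolding T_def by (rule measurable_restrict) (auto intro!: measurable_component_singleton)
  have B': "B' \<in> sets ?P2"
    unfolding B'_def using measurable_sets[OF mapm B] .
  have reidx: "distr ?P2 ?Q (\<lambda>\<omega>. \<lambda>j\<in>S2. \<omega> (j + m)) = ?Q"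
    unfolding T_def by (rule PiM_lborel_reindex) (use fS2 in auto)
  have mB: "measure ?Q B = measure ?P2 B'"
    by (subst reidx[symmetric]) (simp add: measure_distr[OF mapm B] B'_def)
  have pre: "merge S1 T -` E \<inter> space (?P1 \<Otimes>\<^sub>M ?P2) = A \<times> B'"
  proof (intro set_eqI iffI)
    fix p assume p: "p \<in> merge S1 T -` E \<inter> space (?P1 \<Otimes>\<^sub>M ?P2)"
    obtain a b where ab: "p = (a, b)" by force
    have a: "a \<in> PiE S1 (\<lambda>_. UNIV)" and b: "b \<in> PiE T (\<lambda>_. UNIV)"
      using p by (auto simp: ab space_pair_measure space_PiM)
    from p obtain x y where x: "x \<in> X" and y: "y \<in> Y"
      and eq: "merge S1 T (a, b) = restrict (comb m n x y) (S1 \<union> T)"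
      by (auto simp: ab E_def prod_set_eq)
    have "a = restrict x S1"
    proof
      fix i show "a i = restrict x S1 i"
      proof (cases "i \<in> S1")
        case True
        have "merge S1 T (a, b) i = restrict (comb m n x y) (S1 \<union> T) i" using eq by simp
        then show ?thesis using True S1 by (auto simp: merge_def comb_def)
      next
        case False then show ?thesis using a by (auto simp: PiE_def extensional_def)
      qed
    qed
    hence "a \<in> A" using x by (auto simp: A_def)
    moreover have "(\<lambda>j\<in>S2. b (j + m)) = restrict y S2"
    proof
      fix j show "(\<lambda>j\<in>S2. b (j + m)) j = restrict y S2 j"
      proof (cases "j \<in> S2")
        case True
        have "merge S1 T (a, b) (j + m) = restrict (comb m n x y) (S1 \<union> T) (j + m)" using eq by simp
        moreover have "j + m \<in> T" "j + m \<notin> S1" "j < n" using True S1 S2 by (auto simp: T_def)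
        ultimately show ?thesis using True by (auto simp: merge_def comb_def)
      qed simp
    qed
    hence "b \<in> B'" using y b by (auto simp: B'_def B_def space_PiM)
    ultimately show "p \<in> A \<times> B'" by (simp add: ab)
  next
    fix p assume p: "p \<in> A \<times> B'"
    obtain a b where ab: "p = (a, b)" by force
    from p obtain x where x: "x \<in> X" and ax: "a = restrict x S1" by (auto simp: ab A_def)
    from p have b: "b \<in> PiE T (\<lambda>_. UNIV)" by (auto simp: ab B'_def space_PiM)
    from p obtain y where y: "y \<in> Y" and hb: "(\<lambda>j\<in>S2. b (j + m)) = restrict y S2"
      by (auto simp: ab B'_def B_def)
    have "merge S1 T (a, b) = restrict (comb m n x y) (S1 \<union> T)"
    proof
      fix i show "merge S1 T (a, b) i = restrict (comb m n x y) (S1 \<union> T) i"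
      proof (cases "i \<in> S1")
        case True then show ?thesis using S1 ax by (auto simp: merge_def comb_def)
      next
        case False
        show ?thesis
        proof (cases "i \<in> T")
          case True
          then obtain j where j: "j \<in> S2" "i = j + m" by (auto simp: T_def)
          have "b (j + m) = y j" using fun_cong[OF hb, of j] j by simp
          then show ?thesis using j False S2 by (auto simp: merge_def comb_def)
        next
          case False2: False
          then show ?thesis using False by (auto simp: merge_def)
        qed
      qed
    qed
    moreover have "comb m n x y \<in> prod_set m n X Y" using x y by (auto simp: prod_set_eq intro!: image_eqI[where x="(x,y)"])
    ultimately have "merge S1 T (a, b) \<in> E" unfolding E_def by (auto intro: image_eqI)
    moreover have "p \<in> space (?P1 \<Otimes>\<^sub>M ?P2)"
      using b ax by (auto simp: ab space_pair_measure space_PiM)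
    ultimately show "p \<in> merge S1 T -` E \<inter> space (?P1 \<Otimes>\<^sub>M ?P2)" by (simp add: ab)
  qed
  have "proj_vol (S1 \<union> T) (prod_set m n X Y) = measure ?P E"
    by (simp add: proj_vol_def E_def)
  also have "\<dots> = measure (distr (?P1 \<Otimes>\<^sub>M ?P2) ?P (merge S1 T)) E"
    by (simp add: distr_merge[OF disj fS1 fT])
  also have "\<dots> = measure (?P1 \<Otimes>\<^sub>M ?P2) (A \<times> B')"
    by (simp add: measure_distr[OF measurable_merge E] pre)
  also have "\<dots> = measure ?P1 A * measure ?P2 B'"
  proof -
    interpret P1: finite_product_sigma_finite "\<lambda>_::nat. lborel :: real measure" T by standard (rule fT)
    show ?thesis
      by (simp add: measure_def P1.emeasure_pair_measure_Times[OF A B'] enn2real_mult)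
  qed
  also have "\<dots> = proj_vol S1 X * proj_vol S2 Y"
    by (simp add: proj_vol_def A_def B_def[symmetric] mB[symmetric])
  finally show ?thesis by (simp add: T_def)
qed

lemma split_facts:
  fixes m n :: nat
  assumes "S \<subseteq> {..<m+n}"
  shows "S \<inter> {..<m} \<subseteq> {..<m}" "(\<lambda>i. i - m) ` (S - {..<m}) \<subseteq> {..<n}"
    "S = (S \<inter> {..<m}) \<union> (\<lambda>j. j + m) ` ((\<lambda>i. i - m) ` (S - {..<m}))"
    "card (S \<inter> {..<m}) + card ((\<lambda>i. i - m) ` (S - {..<m})) = card S"
proof -
  show "S \<inter> {..<m} \<subseteq> {..<m}" by auto
  show "(\<lambda>i. i - m) ` (S - {..<m}) \<subseteq> {..<n}" using assms by (force simp: subset_iff)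
  show "S = (S \<inter> {..<m}) \<union> (\<lambda>j. j + m) ` ((\<lambda>i. i - m) ` (S - {..<m}))"
  proof (intro set_eqI iffI)
    fix x assume "x \<in> S"
    then show "x \<in> (S \<inter> {..<m}) \<union> (\<lambda>j. j + m) ` ((\<lambda>i. i - m) ` (S - {..<m}))"
      by (cases "x < m") (auto simp: image_iff intro!: bexI[where x=x])
  qed (auto, metis le_add_diff_inverse2 not_less)
  have fin: "finite S" using assms finite_subset by blast
  have "inj_on (\<lambda>i. i - m) (S - {..<m})" by (auto simp: inj_on_def)
  then have "card ((\<lambda>i. i - m) ` (S - {..<m})) = card (S - {..<m})" by (rule card_image)
  then show "card (S \<inter> {..<m}) + card ((\<lambda>i. i - m) ` (S - {..<m})) = card S"
    using card_Int_Diff[OF fin, of "{..<m}"] by simp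
qed

lemma join_facts:
  fixes m n :: nat
  assumes "S1 \<subseteq> {..<m}" "S2 \<subseteq> {..<n}"
  shows "(S1 \<union> (\<lambda>j. j + m) ` S2) \<inter> {..<m} = S1"
    "(\<lambda>i. i - m) ` ((S1 \<union> (\<lambda>j. j + m) ` S2) - {..<m}) = S2"
    "S1 \<union> (\<lambda>j. j + m) ` S2 \<subseteq> {..<m+n}"
    "card (S1 \<union> (\<lambda>j. j + m) ` S2) = card S1 + card S2"
proof -
  show "(S1 \<union> (\<lambda>j. j + m) ` S2) \<inter> {..<m} = S1" using assms by (auto simp: subset_iff)
  have "(S1 \<union> (\<lambda>j. j + m) ` S2) - {..<m} = (\<lambda>j. j + m) ` S2" using assms by auto
  then show "(\<lambda>i. i - m) ` ((S1 \<union> (\<lambda>j. j + m) ` S2) - {..<m}) = S2"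
    by (simp add: image_image)
  show "S1 \<union> (\<lambda>j. j + m) ` S2 \<subseteq> {..<m+n}" using assms by auto
  have f1: "finite S1" using assms(1) finite_subset by blast
  have f2: "finite S2" using assms(2) finite_subset by blast
  have "card ((\<lambda>j. j + m) ` S2) = card S2" by (rule card_image) (auto simp: inj_on_def)
  moreover have "S1 \<inter> (\<lambda>j. j + m) ` S2 = {}" using assms by auto
  ultimately show "card (S1 \<union> (\<lambda>j. j + m) ` S2) = card S1 + card S2"
    using f1 f2 by (simp add: card_Un_disjoint)
qed

theorem proposition8p1:
  fixes m n k :: nat and X Y :: "(nat \<Rightarrow> real) set"
  assumes "X \<subseteq> euclid m" and "compact X" and "l1_convex m X"
    and "Y \<subseteq> euclid n" and "compact Y" and "l1_convex n Y"
    and "k \<le> m + n"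
  shows "intrinsic_vol (m + n) k (prod_set m n X Y) =
    (\<Sum>(i, j)\<in>{(i, j). i \<le> m \<and> j \<le> n \<and> i + j = k}.
        intrinsic_vol m i X * intrinsic_vol n j Y)"
proof -
  define I where "I = {(i, j). i \<le> m \<and> j \<le> n \<and> i + j = k}"
  define C where "C = (\<lambda>x::nat\<times>nat. coord_subspaces m (fst x) \<times> coord_subspaces n (snd x))"
  define F where "F = (\<lambda>p::nat set \<times> nat set. proj_vol (fst p) X * proj_vol (snd p) Y)"
  have finI: "finite I" unfolding I_def
    by (rule finite_subset[of _ "{..m} \<times> {..n}"]) auto
  have fincs: "finite (coord_subspaces N i)" for N i
    unfolding coord_subspaces_def by (rule finite_subset[of _ "Pow {..<N}"]) auto
  have finC: "\<forall>x\<in>I. finite (C x)" by (simp add: C_def fincs)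
  have "(\<Sum>(i, j)\<in>I. intrinsic_vol m i X * intrinsic_vol n j Y) = (\<Sum>x\<in>I. \<Sum>p\<in>C x. F p)"
  proof (rule sum.cong)
    fix x assume "x \<in> I"
    obtain i j where x: "x = (i, j)" by force
    have "intrinsic_vol m i X * intrinsic_vol n j Y =
       (\<Sum>S1\<in>coord_subspaces m i. \<Sum>S2\<in>coord_subspaces n j. proj_vol S1 X * proj_vol S2 Y)"
      unfolding intrinsic_vol_def by (rule sum_product)
    also have "\<dots> = (\<Sum>p\<in>C x. F p)"
      by (simp add: x C_def F_def sum.cartesian_product case_prod_beta)
    finally show "(case x of (i, j) \<Rightarrow> intrinsic_vol m i X * intrinsic_vol n j Y) = (\<Sum>p\<in>C x. F p)"
      by (simp add: x)
  qed simp
  also have "\<dots> = (\<Sum>(x, p)\<in>Sigma I C. F p)"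
    by (rule sum.Sigma[OF finI finC])
  also have "\<dots> = intrinsic_vol (m + n) k (prod_set m n X Y)"
    unfolding intrinsic_vol_def
  proof (rule sum.reindex_bij_witness[where j="\<lambda>q. fst (snd q) \<union> (\<lambda>j. j + m) ` snd (snd q)"
      and i="\<lambda>S. ((card (S \<inter> {..<m}), card ((\<lambda>i. i - m) ` (S - {..<m}))),
                  (S \<inter> {..<m}, (\<lambda>i. i - m) ` (S - {..<m})))"])
    fix q assume q: "q \<in> Sigma I C"
    obtain i j S1 S2 where qe: "q = ((i, j), (S1, S2))" by (metis prod.collapse)
    have S1: "S1 \<subseteq> {..<m}" "card S1 = i" and S2: "S2 \<subseteq> {..<n}" "card S2 = j" and ij: "i + j = k"
      using q by (auto simp: qe C_def coord_subspaces_def I_def)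
    note jf = join_facts[OF S1(1) S2(1)]
    show "((card ((fst (snd q) \<union> (\<lambda>j. j + m) ` snd (snd q)) \<inter> {..<m}),
           card ((\<lambda>i. i - m) ` ((fst (snd q) \<union> (\<lambda>j. j + m) ` snd (snd q)) - {..<m}))),
          ((fst (snd q) \<union> (\<lambda>j. j + m) ` snd (snd q)) \<inter> {..<m},
           (\<lambda>i. i - m) ` ((fst (snd q) \<union> (\<lambda>j. j + m) ` snd (snd q)) - {..<m}))) = q"
      using jf S1 S2 by (simp add: qe)
    show "fst (snd q) \<union> (\<lambda>j. j + m) ` snd (snd q) \<in> coord_subspaces (m + n) k"
      using jf S1 S2 ij by (simp add: qe coord_subspaces_def)
    show "proj_vol (fst (snd q) \<union> (\<lambda>j. j + m) ` snd (snd q)) (prod_set m n X Y) = (case q of (x, p) \<Rightarrow> F p)"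
      using proj_prod[OF assms(2) assms(5) S1(1) S2(1)] by (simp add: qe F_def)
  next
    fix S assume S: "S \<in> coord_subspaces (m + n) k"
    then have Ss: "S \<subseteq> {..<m+n}" and cS: "card S = k" by (auto simp: coord_subspaces_def)
    note sf = split_facts[OF Ss]
    show "fst (snd ((card (S \<inter> {..<m}), card ((\<lambda>i. i - m) ` (S - {..<m}))),
                  (S \<inter> {..<m}, (\<lambda>i. i - m) ` (S - {..<m})))) \<union>
          (\<lambda>j. j + m) ` snd (snd ((card (S \<inter> {..<m}), card ((\<lambda>i. i - m) ` (S - {..<m}))),
                  (S \<inter> {..<m}, (\<lambda>i. i - m) ` (S - {..<m})))) = S"
      using sf(3) by simp
    have c1: "card (S \<inter> {..<m}) \<le> m"
      using card_mono[OF _ sf(1)] by simp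
    have c2: "card ((\<lambda>i. i - m) ` (S - {..<m})) \<le> n"
      using card_mono[OF _ sf(2)] by simp
    show "((card (S \<inter> {..<m}), card ((\<lambda>i. i - m) ` (S - {..<m}))),
                  (S \<inter> {..<m}, (\<lambda>i. i - m) ` (S - {..<m}))) \<in> Sigma I C"
      using sf(1,2,4) c1 c2 cS by (simp add: I_def C_def coord_subspaces_def)
  qed
  finally show ?thesis by (simp add: I_def)
qed

end
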